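(* Fix a $\mathbb{Z}$-basis $u_1,\dots,u_d$ of $\mathcal{O}_K$. Let $\Lambda=\mathcal{O}_Kv_1\oplus\cdots\oplus\mathcal{O}_Kv_k\subseteq K_{\mathbb{R}}^m$ be a free $\mathcal{O}_K$-module of rank $k\leq m$. Then there exists a $\mathbb{Z}$-basis $\{w_{ij}\}_{1\leq i\leq k,\,1\leq j\leq d}$ of $\Lambda$ such that for all $i,j$ \[ c\,\|v_i\|\leq\|w_{ij}\|\leq c'\,\|v_i\|, \] where $c,c'>0$ depend only on the fixed $\mathbb{Z}$-basis of $\mathcal{O}_K$, and not on $v_1,\dots,v_k$, $\Lambda$, $k$ or $m$.
   Context: $K$ is a number field of degree $d$, $K_{\mathbb{R}}=K\otimes\mathbb{R}$ with norm $\|x\|^2=|\Delta_K|^{-2/d}\operatorname{Tr}(x\bar{x})$ ($\Delta_K$ the discriminant, $\bar{\ }$ complex conjugation at complex places), and $K_{\mathbb{R}}^m$ carries the orthogonal sum of $m$ copies of this norm. *)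

theory Defs
  imports "HOL-Analysis.Analysis" "HOL-Computational_Algebra.Polynomial"
begin

text \<open>A number field is modelled as a subfield K of the complex numbers that is
finite-dimensional over the rationals (every number field is isomorphic to one).\<close>

definition subfield_C :: "complex set \<Rightarrow> bool" where
  "subfield_C K \<longleftrightarrow> 0 \<in> K \<and> 1 \<in> K \<and>
     (\<forall>x\<in>K. \<forall>y\<in>K. x + y \<in> K \<and> x * y \<in> K) \<and>
     (\<forall>x\<in>K. - x \<in> K \<and> inverse x \<in> K)"

definition Q_basis :: "complex set \<Rightarrow> nat \<Rightarrow> (nat \<Rightarrow> complex) \<Rightarrow> bool" where
  "Q_basis K n b \<longleftrightarrow> (\<forall>j<n. b j \<in> K) \<and>
     (\<forall>x\<in>K. \<exists>q::nat \<Rightarrow> rat. x = (\<Sum>j<n. of_rat (q j) * b j)) \<and>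
     (\<forall>q::nat \<Rightarrow> rat. (\<Sum>j<n. of_rat (q j) * b j) = 0 \<longrightarrow> (\<forall>j<n. q j = 0))"

definition number_field :: "complex set \<Rightarrow> bool" where
  "number_field K \<longleftrightarrow> subfield_C K \<and> (\<exists>n b. Q_basis K n b)"

definition nf_degree :: "complex set \<Rightarrow> nat" where
  "nf_degree K = (THE n. \<exists>b. Q_basis K n b)"

definition algebraic_integer :: "complex \<Rightarrow> bool" where
  "algebraic_integer x \<longleftrightarrow> (\<exists>p :: int poly. lead_coeff p = 1 \<and> poly (map_poly of_int p) x = 0)"

definition ring_of_integers :: "complex set \<Rightarrow> complex set" where
  "ring_of_integers K = {x \<in> K. algebraic_integer x}"

definition Z_basis_OK :: "complex set \<Rightarrow> nat \<Rightarrow> (nat \<Rightarrow> complex) \<Rightarrow> bool" where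
  "Z_basis_OK K n u \<longleftrightarrow> (\<forall>j<n. u j \<in> ring_of_integers K) \<and>
     (\<forall>x\<in>ring_of_integers K. \<exists>a::nat \<Rightarrow> int. x = (\<Sum>j<n. of_int (a j) * u j)) \<and>
     (\<forall>a::nat \<Rightarrow> int. (\<Sum>j<n. of_int (a j) * u j) = 0 \<longrightarrow> (\<forall>j<n. a j = 0))"

definition embeddings :: "complex set \<Rightarrow> (complex \<Rightarrow> complex) set" where
  "embeddings K = {\<sigma>. (\<forall>x\<in>K. \<forall>y\<in>K. \<sigma> (x + y) = \<sigma> x + \<sigma> y \<and> \<sigma> (x * y) = \<sigma> x * \<sigma> y)
      \<and> \<sigma> 1 = 1 \<and> (\<forall>x. x \<notin> K \<longrightarrow> \<sigma> x = 0)}"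

definition nf_trace :: "complex set \<Rightarrow> complex \<Rightarrow> complex" where
  "nf_trace K x = (\<Sum>\<sigma>\<in>embeddings K. \<sigma> x)"

text \<open>Discriminant: det (Tr(b_i b_j)) for a Z-basis b of O_K (independent of the choice).\<close>
definition nf_disc :: "complex set \<Rightarrow> complex" where
  "nf_disc K = (let d = nf_degree K; b = (SOME b. Z_basis_OK K d b) in
     (\<Sum>p | p permutes {..<d}. of_int (sign p) *
        (\<Prod>i<d. nf_trace K (b i * b (p i)))))"

text \<open>K_R = K \<otimes> R, realised (Minkowski) as the real subspace of C^Hom(K,C)
 of families z with z(conj \<circ> \<sigma>) = conj (z \<sigma>); extensional outside the embeddings.
 An element x of K corresponds to (\<sigma>(x))_\<sigma>.\<close>
type_synonym kr = "(complex \<Rightarrow> complex) \<Rightarrow> complex"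

definition KR :: "complex set \<Rightarrow> kr set" where
  "KR K = {z. (\<forall>\<sigma>\<in>embeddings K. z (cnj \<circ> \<sigma>) = cnj (z \<sigma>)) \<and>
              (\<forall>\<sigma>. \<sigma> \<notin> embeddings K \<longrightarrow> z \<sigma> = 0)}"

definition kr_mult :: "kr \<Rightarrow> kr \<Rightarrow> kr" where
  "kr_mult z w = (\<lambda>\<sigma>. z \<sigma> * w \<sigma>)"

text \<open>Complex conjugation at the complex places (identity at the real places).\<close>
definition kr_conj :: "kr \<Rightarrow> kr" where
  "kr_conj z = (\<lambda>\<sigma>. cnj (z \<sigma>))"

definition kr_trace :: "complex set \<Rightarrow> kr \<Rightarrow> complex" where
  "kr_trace K z = (\<Sum>\<sigma>\<in>embeddings K. z \<sigma>)"

definition kr_scale :: "complex \<Rightarrow> kr \<Rightarrow> kr" where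
  "kr_scale a z = (\<lambda>\<sigma>. \<sigma> a * z \<sigma>)"

definition kr_norm :: "complex set \<Rightarrow> kr \<Rightarrow> real" where
  "kr_norm K z = sqrt (cmod (nf_disc K) powr (- 2 / real (nf_degree K)) *
                        Re (kr_trace K (kr_mult z (kr_conj z))))"

type_synonym krvec = "nat \<Rightarrow> kr"

definition KRm :: "complex set \<Rightarrow> nat \<Rightarrow> krvec set" where
  "KRm K m = {x. (\<forall>l<m. x l \<in> KR K) \<and> (\<forall>l\<ge>m. x l = (\<lambda>_. 0))}"

definition krm_norm :: "complex set \<Rightarrow> nat \<Rightarrow> krvec \<Rightarrow> real" where
  "krm_norm K m x = sqrt (\<Sum>l<m. (kr_norm K (x l))\<^sup>2)"

definition krm_add :: "krvec \<Rightarrow> krvec \<Rightarrow> krvec" where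
  "krm_add x y = (\<lambda>l \<sigma>. x l \<sigma> + y l \<sigma>)"

definition krm_scale :: "complex \<Rightarrow> krvec \<Rightarrow> krvec" where
  "krm_scale a x = (\<lambda>l. kr_scale a (x l))"

definition krm_zero :: krvec where
  "krm_zero = (\<lambda>l \<sigma>. 0)"

definition krm_sum :: "('i \<Rightarrow> krvec) \<Rightarrow> 'i set \<Rightarrow> krvec" where
  "krm_sum f I = (\<lambda>l \<sigma>. \<Sum>i\<in>I. f i l \<sigma>)"

definition krm_intscale :: "int \<Rightarrow> krvec \<Rightarrow> krvec" where
  "krm_intscale n x = (\<lambda>l \<sigma>. of_int n * x l \<sigma>)"

definition OK_span :: "complex set \<Rightarrow> nat \<Rightarrow> (nat \<Rightarrow> krvec) \<Rightarrow> krvec set" where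
  "OK_span K k v = {krm_sum (\<lambda>i. krm_scale (a i) (v i)) {..<k} | a.
                      \<forall>i<k. a i \<in> ring_of_integers K}"

definition OK_free :: "complex set \<Rightarrow> nat \<Rightarrow> (nat \<Rightarrow> krvec) \<Rightarrow> bool" where
  "OK_free K k v \<longleftrightarrow> (\<forall>a. (\<forall>i<k. a i \<in> ring_of_integers K) \<longrightarrow>
      krm_sum (\<lambda>i. krm_scale (a i) (v i)) {..<k} = krm_zero \<longrightarrow> (\<forall>i<k. a i = 0))"

definition Z_basis_of :: "'i set \<Rightarrow> ('i \<Rightarrow> krvec) \<Rightarrow> krvec set \<Rightarrow> bool" where
  "Z_basis_of I w L \<longleftrightarrow> (\<forall>i\<in>I. w i \<in> L) \<and>
     (\<forall>x\<in>L. \<exists>n::'i \<Rightarrow> int. x = krm_sum (\<lambda>i. krm_intscale (n i) (w i)) I) \<and>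
     (\<forall>n::'i \<Rightarrow> int. krm_sum (\<lambda>i. krm_intscale (n i) (w i)) I = krm_zero \<longrightarrow> (\<forall>i\<in>I. n i = 0))"

end

theory Submission imports Defs "Jordan_Normal_Form.Char_Poly"
begin

lemma alg_int_module:
  fixes x :: complex and mv :: "nat \<Rightarrow> complex" and A :: "nat \<Rightarrow> nat \<Rightarrow> int"
  assumes n: "0 < n" and m0: "mv 0 \<noteq> 0"
    and eq: "\<forall>i<n. x * mv i = (\<Sum>j<n. of_int (A i j) * mv j)"
  shows "algebraic_integer x"
proof -
  define B where "B = (mat n n (\<lambda>(i,j). A i j) :: int mat)"
  define C where "C = (map_mat of_int B :: complex mat)"
  define v where "v = vec n mv"
  have B: "B \<in> carrier_mat n n" unfolding B_def by simp
  have C: "C \<in> carrier_mat n n" unfolding C_def B_def by simp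
  have "C *\<^sub>v v = x \<cdot>\<^sub>v v"
  proof (rule eq_vecI)
    fix i assume i: "i < dim_vec (x \<cdot>\<^sub>v v)"
    hence i: "i < n" unfolding v_def by simp
    have "(C *\<^sub>v v) $ i = (\<Sum>j<n. of_int (A i j) * mv j)"
      using i unfolding C_def B_def v_def
      by (simp add: mult_mat_vec_def scalar_prod_def lessThan_atLeast0)
    also have "\<dots> = x * mv i" using eq i by simp
    finally show "(C *\<^sub>v v) $ i = (x \<cdot>\<^sub>v v) $ i" using i unfolding v_def by simp
  qed (simp add: v_def C_def B_def)
  moreover have "v \<noteq> 0\<^sub>v n"
  proof
    assume "v = 0\<^sub>v n"
    hence "v $ 0 = 0" using n by simp
    thus False using m0 n unfolding v_def by simp
  qed
  moreover have "v \<in> carrier_vec n" unfolding v_def by simp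
  ultimately have "eigenvalue C x" unfolding eigenvalue_def eigenvector_def using C by auto
  hence "poly (char_poly C) x = 0" using eigenvalue_root_char_poly[OF C] by simp
  moreover have "char_poly C = map_poly of_int (char_poly B)"
    unfolding C_def by (rule of_int_hom.char_poly_hom[OF B])
  moreover have "lead_coeff (char_poly B) = 1" using degree_monic_char_poly[OF B] by simp
  ultimately show ?thesis unfolding algebraic_integer_def by auto
qed

lemma alg_int_lincomb:
  fixes \<alpha> \<beta> :: complex and r s :: int
  assumes ha: "algebraic_integer \<alpha>" and hb: "algebraic_integer \<beta>"
  shows "algebraic_integer (of_int r * \<alpha> + of_int s * \<beta>)"
proof -
  obtain p :: "int poly" where p1: "lead_coeff p = 1" and p2: "poly (map_poly of_int p) \<alpha> = 0"
    using ha unfolding algebraic_integer_def by blast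
  obtain q :: "int poly" where q1: "lead_coeff q = 1" and q2: "poly (map_poly of_int q) \<beta> = 0"
    using hb unfolding algebraic_integer_def by blast
  define a where "a = degree p"
  define b where "b = degree q"
  have polyexp: "poly (map_poly (of_int :: int \<Rightarrow> complex) f) z = (\<Sum>t\<le>degree f. of_int (coeff f t) * z ^ t)" for f z
    by (simp add: poly_altdef of_int_hom.degree_map_poly_hom)
  have a0: "a > 0"
  proof (rule ccontr)
    assume "\<not> a > 0" hence "a = 0" by simp
    hence "poly (map_poly (of_int :: int \<Rightarrow> complex) p) \<alpha> = 1" using p1 polyexp[of p \<alpha>] unfolding a_def by simp
    thus False using p2 by simp
  qed
  have b0: "b > 0"
  proof (rule ccontr)
    assume "\<not> b > 0" hence "b = 0" by simp
    hence "poly (map_poly (of_int :: int \<Rightarrow> complex) q) \<beta> = 1" using q1 polyexp[of q \<beta>] unfolding b_def by simp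
    thus False using q2 by simp
  qed
  have redp: "\<alpha> ^ a = (\<Sum>t<a. of_int (- coeff p t) * \<alpha> ^ t)"
  proof -
    have "(\<Sum>t\<le>a. of_int (coeff p t) * \<alpha> ^ t) = 0" using p2 polyexp[of p \<alpha>] unfolding a_def by simp
    hence "\<alpha> ^ a + (\<Sum>t<a. of_int (coeff p t) * \<alpha> ^ t) = 0"
      using p1 unfolding a_def by (simp add: lessThan_Suc_atMost[symmetric] add.commute)
    thus ?thesis by (simp add: sum_negf eq_neg_iff_add_eq_0 add.commute)
  qed
  have redq: "\<beta> ^ b = (\<Sum>t<b. of_int (- coeff q t) * \<beta> ^ t)"
  proof -
    have "(\<Sum>t\<le>b. of_int (coeff q t) * \<beta> ^ t) = 0" using q2 polyexp[of q \<beta>] unfolding b_def by simp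
    hence "\<beta> ^ b + (\<Sum>t<b. of_int (coeff q t) * \<beta> ^ t) = 0"
      using q1 unfolding b_def by (simp add: lessThan_Suc_atMost[symmetric] add.commute)
    thus ?thesis by (simp add: sum_negf eq_neg_iff_add_eq_0 add.commute)
  qed
  define mv where "mv k = \<alpha> ^ (k div b) * \<beta> ^ (k mod b)" for k
  define n where "n = a * b"
  define S where "S = {(\<Sum>j<n. of_int (c j) * mv j) | c :: nat \<Rightarrow> int. True}"
  have SI: "x \<in> S" if "x = (\<Sum>j<n. of_int (c j) * mv j)" for x c
    unfolding S_def using that by blast
  have S0: "0 \<in> S" unfolding S_def by (rule CollectI, rule exI[of _ "\<lambda>_. 0"]) simp
  have Sadd: "x + y \<in> S" if hx: "x \<in> S" and hy: "y \<in> S" for x y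
  proof -
    obtain c1 where "x = (\<Sum>j<n. of_int (c1 j) * mv j)" using hx unfolding S_def by blast
    moreover obtain c2 where "y = (\<Sum>j<n. of_int (c2 j) * mv j)" using hy unfolding S_def by blast
    ultimately have "x + y = (\<Sum>j<n. of_int (c1 j + c2 j) * mv j)"
      by (simp add: sum.distrib distrib_right)
    thus ?thesis by (rule SI)
  qed
  have Smul: "of_int t * x \<in> S" if hx: "x \<in> S" for x t
  proof -
    obtain c1 where "x = (\<Sum>j<n. of_int (c1 j) * mv j)" using hx unfolding S_def by blast
    hence "of_int t * x = (\<Sum>j<n. of_int (t * c1 j) * mv j)"
      by (simp add: sum_distrib_left mult.assoc)
    thus ?thesis by (rule SI)
  qed
  have Sgen: "mv j \<in> S" if "j < n" for j
  proof -
    have "(\<Sum>i<n. of_int (if i = j then 1 else 0) * mv i) = (\<Sum>i<n. if i = j then mv i else 0)"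
      by (rule sum.cong) auto
    hence "mv j = (\<Sum>i<n. of_int (if i = j then 1 else 0) * mv i)"
      using that by (simp add: sum.delta)
    thus ?thesis by (rule SI)
  qed
  have Ssum: "finite F \<Longrightarrow> (\<forall>t\<in>F. f t \<in> S) \<Longrightarrow> sum f F \<in> S" for F f
    by (induction F rule: finite_induct) (auto intro: S0 Sadd)
  have mvij: "mv (i * b + j) = \<alpha> ^ i * \<beta> ^ j" if "j < b" for i j
    unfolding mv_def using that by simp
  have idx: "i * b + j < n" if "i < a" "j < b" for i j
  proof -
    have "i * b + j < i * b + b" using that by simp
    also have "\<dots> = (i + 1) * b" by simp
    also have "\<dots> \<le> a * b" using that by (intro mult_right_mono) auto
    finally show ?thesis unfolding n_def .
  qed
  have amul: "\<alpha> * (\<alpha> ^ i * \<beta> ^ j) \<in> S" if "i < a" "j < b" for i j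
  proof (cases "i + 1 < a")
    case True
    have "\<alpha> * (\<alpha> ^ i * \<beta> ^ j) = mv ((i + 1) * b + j)" unfolding mvij[OF that(2)] by simp
    thus ?thesis using Sgen idx[OF True that(2)] by simp
  next
    case False
    hence ia: "i + 1 = a" using that by simp
    have "\<alpha> * (\<alpha> ^ i * \<beta> ^ j) = \<alpha> ^ a * \<beta> ^ j" using ia by (simp flip: ia)
    also have "\<dots> = (\<Sum>t<a. of_int (- coeff p t) * mv (t * b + j))"
      by (subst redp) (simp add: sum_distrib_right mvij[OF that(2)] mult.assoc)
    finally have e: "\<alpha> * (\<alpha> ^ i * \<beta> ^ j) = (\<Sum>t<a. of_int (- coeff p t) * mv (t * b + j))" .
    have "(\<Sum>t<a. of_int (- coeff p t) * mv (t * b + j)) \<in> S"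
      by (rule Ssum) (auto intro!: Smul Sgen idx that simp del: of_int_minus)
    thus ?thesis using e by simp
  qed
  have bmul: "\<beta> * (\<alpha> ^ i * \<beta> ^ j) \<in> S" if "i < a" "j < b" for i j
  proof (cases "j + 1 < b")
    case True
    have "\<beta> * (\<alpha> ^ i * \<beta> ^ j) = mv (i * b + (j + 1))" unfolding mvij[OF True] by simp
    thus ?thesis using Sgen idx[OF that(1) True] by simp
  next
    case False
    hence jb: "j + 1 = b" using that by simp
    have "\<beta> * (\<alpha> ^ i * \<beta> ^ j) = \<alpha> ^ i * \<beta> ^ b" by (simp flip: jb)
    also have "\<dots> = (\<Sum>t<b. of_int (- coeff q t) * mv (i * b + t))"
      by (subst redq) (simp add: sum_distrib_left mvij mult.assoc mult.left_commute)
    finally have e: "\<beta> * (\<alpha> ^ i * \<beta> ^ j) = (\<Sum>t<b. of_int (- coeff q t) * mv (i * b + t))" .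
    have "(\<Sum>t<b. of_int (- coeff q t) * mv (i * b + t)) \<in> S"
      by (rule Ssum) (auto intro!: Smul Sgen idx that simp del: of_int_minus)
    thus ?thesis using e by simp
  qed
  define x where "x = of_int r * \<alpha> + of_int s * \<beta>"
  have xS: "x * mv k \<in> S" if "k < n" for k
  proof -
    have i: "k div b < a" using that b0 unfolding n_def by (simp add: less_mult_imp_div_less)
    have j: "k mod b < b" using b0 by simp
    have "x * mv k = of_int r * (\<alpha> * (\<alpha> ^ (k div b) * \<beta> ^ (k mod b)))
        + of_int s * (\<beta> * (\<alpha> ^ (k div b) * \<beta> ^ (k mod b)))"
      unfolding x_def mv_def by (simp add: algebra_simps)
    thus ?thesis using amul[OF i j] bmul[OF i j] Smul Sadd by simp
  qed
  hence "\<forall>k<n. \<exists>c. x * mv k = (\<Sum>j<n. of_int (c j) * mv j)" unfolding S_def by blast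
  then obtain A where A: "\<forall>k<n. x * mv k = (\<Sum>j<n. of_int (A k j) * mv j)" by metis
  have "algebraic_integer x"
    by (rule alg_int_module[OF _ _ A]) (use a0 b0 in \<open>auto simp: n_def mv_def\<close>)
  thus ?thesis unfolding x_def .
qed

lemma alg_int_0: "algebraic_integer 0"
  unfolding algebraic_integer_def by (rule exI[of _ "[:0, 1:]"]) simp

lemma alg_int_sum:
  assumes "finite F" "\<forall>j\<in>F. algebraic_integer (f j)"
  shows "algebraic_integer (\<Sum>j\<in>F. of_int (c j) * f j)"
  using assms
proof (induction F rule: finite_induct)
  case empty
  then show ?case by (simp add: alg_int_0)
next
  case (insert x F)
  have "algebraic_integer (of_int (c x) * f x + of_int 1 * (\<Sum>j\<in>F. of_int (c j) * f j))"
    by (rule alg_int_lincomb) (use insert in auto)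
  thus ?case using insert by simp
qed

lemma subK:
  assumes "subfield_C K"
  shows "0 \<in> K" "1 \<in> K" "x \<in> K \<Longrightarrow> y \<in> K \<Longrightarrow> x + y \<in> K"
    "x \<in> K \<Longrightarrow> y \<in> K \<Longrightarrow> x * y \<in> K" "x \<in> K \<Longrightarrow> - x \<in> K"
    "x \<in> K \<Longrightarrow> inverse x \<in> K"
  using assms unfolding subfield_C_def by auto

lemma of_nat_K: "subfield_C K \<Longrightarrow> of_nat n \<in> K"
  by (induction n) (auto intro: subK)

lemma of_int_K: assumes K: "subfield_C K" shows "of_int n \<in> K"
proof (cases n rule: int_cases)
  case (nonneg m) then show ?thesis using of_nat_K[OF K] by simp
next
  case (neg m)
  have "- of_nat (Suc m) \<in> K" by (rule subK(5)[OF K of_nat_K[OF K]])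
  then show ?thesis using neg by (simp del: of_nat_Suc)
qed

lemma emb_basic:
  assumes K: "subfield_C K" and s: "\<sigma> \<in> embeddings K"
  shows "\<sigma> 0 = 0" "x \<in> K \<Longrightarrow> y \<in> K \<Longrightarrow> \<sigma> (x + y) = \<sigma> x + \<sigma> y"
    "x \<in> K \<Longrightarrow> y \<in> K \<Longrightarrow> \<sigma> (x * y) = \<sigma> x * \<sigma> y" "\<sigma> 1 = 1"
proof -
  have "\<sigma> (0 + 0) = \<sigma> 0 + \<sigma> 0" using s subK(1)[OF K] unfolding embeddings_def by blast
  thus "\<sigma> 0 = 0" by simp
  show "x \<in> K \<Longrightarrow> y \<in> K \<Longrightarrow> \<sigma> (x + y) = \<sigma> x + \<sigma> y"
       "x \<in> K \<Longrightarrow> y \<in> K \<Longrightarrow> \<sigma> (x * y) = \<sigma> x * \<sigma> y" "\<sigma> 1 = 1"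
    using s unfolding embeddings_def by auto
qed

lemma emb_neg:
  assumes K: "subfield_C K" and s: "\<sigma> \<in> embeddings K" and x: "x \<in> K"
  shows "\<sigma> (- x) = - \<sigma> x"
proof -
  have "\<sigma> (x + - x) = \<sigma> x + \<sigma> (- x)" by (rule emb_basic(2)[OF K s x subK(5)[OF K x]])
  hence "\<sigma> x + \<sigma> (- x) = 0" using emb_basic(1)[OF K s] by simp
  thus ?thesis by (metis add.commute eq_neg_iff_add_eq_0)
qed

lemma emb_nat:
  assumes K: "subfield_C K" and s: "\<sigma> \<in> embeddings K"
  shows "\<sigma> (of_nat n) = of_nat n"
proof (induction n)
  case 0 then show ?case using emb_basic(1)[OF K s] by simp
next
  case (Suc n)
  have "\<sigma> (of_nat n + 1) = \<sigma> (of_nat n) + \<sigma> 1"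
    by (rule emb_basic(2)[OF K s of_nat_K[OF K] subK(2)[OF K]])
  thus ?case using Suc emb_basic(4)[OF K s] by (simp add: add.commute)
qed

lemma emb_int:
  assumes K: "subfield_C K" and s: "\<sigma> \<in> embeddings K"
  shows "\<sigma> (of_int n) = of_int n"
proof (cases n rule: int_cases)
  case (nonneg m) then show ?thesis using emb_nat[OF K s] by simp
next
  case (neg m)
  have "\<sigma> (- of_nat (Suc m)) = - \<sigma> (of_nat (Suc m))"
    by (rule emb_neg[OF K s of_nat_K[OF K]])
  then show ?thesis using neg emb_nat[OF K s, of "Suc m"] by simp
qed

lemma emb_lin:
  assumes K: "subfield_C K" and s: "\<sigma> \<in> embeddings K" and F: "finite F"
    and f: "\<forall>j\<in>F. f j \<in> K"
  shows "(\<Sum>j\<in>F. of_int (c j) * f j) \<in> K \<and>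
         \<sigma> (\<Sum>j\<in>F. of_int (c j) * f j) = (\<Sum>j\<in>F. of_int (c j) * \<sigma> (f j))"
  using F f
proof (induction F rule: finite_induct)
  case empty
  then show ?case using subK(1)[OF K] emb_basic(1)[OF K s] by simp
next
  case (insert x F)
  have fx: "f x \<in> K" using insert by simp
  have t: "of_int (c x) * f x \<in> K" by (rule subK(4)[OF K of_int_K[OF K] fx])
  have st: "\<sigma> (of_int (c x) * f x) = of_int (c x) * \<sigma> (f x)"
    using emb_basic(3)[OF K s of_int_K[OF K] fx] emb_int[OF K s] by simp
  have IH: "(\<Sum>j\<in>F. of_int (c j) * f j) \<in> K \<and>
         \<sigma> (\<Sum>j\<in>F. of_int (c j) * f j) = (\<Sum>j\<in>F. of_int (c j) * \<sigma> (f j))"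
    using insert by simp
  show ?case using insert(1,2) IH t st emb_basic(2)[OF K s t, of "\<Sum>j\<in>F. of_int (c j) * f j"]
    subK(3)[OF K t, of "\<Sum>j\<in>F. of_int (c j) * f j"] by simp
qed

lemma lin_K:
  assumes K: "subfield_C K" and F: "finite F" and f: "\<forall>j\<in>F. f j \<in> K"
  shows "(\<Sum>j\<in>F. of_int (c j) * f j) \<in> K"
  using F f
proof (induction F rule: finite_induct)
  case empty
  then show ?case using subK(1)[OF K] by simp
next
  case (insert x F)
  have t: "of_int (c x) * f x \<in> K" using insert subK(4)[OF K of_int_K[OF K]] by simp
  show ?case using insert subK(3)[OF K t] by simp
qed

lemma emb_nz:
  assumes K: "subfield_C K" and s: "\<sigma> \<in> embeddings K" and x: "x \<in> K" "x \<noteq> 0"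
  shows "\<sigma> x \<noteq> 0"
proof
  assume "\<sigma> x = 0"
  have "\<sigma> (x * inverse x) = \<sigma> x * \<sigma> (inverse x)"
    by (rule emb_basic(3)[OF K s x(1) subK(6)[OF K x(1)]])
  thus False using \<open>\<sigma> x = 0\<close> x(2) emb_basic(4)[OF K s] by simp
qed

lemma trace_sq: "Re (kr_trace K (kr_mult z (kr_conj z))) = (\<Sum>\<sigma>\<in>embeddings K. (cmod (z \<sigma>))\<^sup>2)"
proof -
  have "Re (kr_trace K (kr_mult z (kr_conj z))) = (\<Sum>\<sigma>\<in>embeddings K. Re (z \<sigma> * cnj (z \<sigma>)))"
    unfolding kr_trace_def kr_mult_def kr_conj_def by simp
  also have "\<dots> = (\<Sum>\<sigma>\<in>embeddings K. (cmod (z \<sigma>))\<^sup>2)"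
    by (rule sum.cong) (simp_all flip: complex_norm_square)
  finally show ?thesis .
qed

lemma krm_norm_alt:
  "krm_norm K m x = sqrt (cmod (nf_disc K) powr (- 2 / real (nf_degree K)) *
      (\<Sum>l<m. \<Sum>\<sigma>\<in>embeddings K. (cmod (x l \<sigma>))\<^sup>2))"
proof -
  have "(kr_norm K (x l))\<^sup>2 = cmod (nf_disc K) powr (- 2 / real (nf_degree K)) *
      (\<Sum>\<sigma>\<in>embeddings K. (cmod (x l \<sigma>))\<^sup>2)" for l
    unfolding kr_norm_def trace_sq by (simp add: sum_nonneg)
  thus ?thesis unfolding krm_norm_def by (simp add: sum_distrib_left)
qed

lemma norm_scale:
  assumes c: "0 \<le> c" "0 \<le> c'"
    and b: "finite (embeddings K) \<Longrightarrow> \<forall>\<sigma>\<in>embeddings K. c \<le> cmod (\<sigma> a) \<and> cmod (\<sigma> a) \<le> c'"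
  shows "c * krm_norm K m x \<le> krm_norm K m (krm_scale a x) \<and>
         krm_norm K m (krm_scale a x) \<le> c' * krm_norm K m x"
proof -
  define F where "F = cmod (nf_disc K) powr (- 2 / real (nf_degree K))"
  define X where "X = (\<Sum>l<m. \<Sum>\<sigma>\<in>embeddings K. (cmod (x l \<sigma>))\<^sup>2)"
  define Y where "Y = (\<Sum>l<m. \<Sum>\<sigma>\<in>embeddings K. (cmod (\<sigma> a * x l \<sigma>))\<^sup>2)"
  have F: "F \<ge> 0" unfolding F_def by simp
  have n1: "krm_norm K m x = sqrt (F * X)" unfolding krm_norm_alt F_def X_def ..
  have n2: "krm_norm K m (krm_scale a x) = sqrt (F * Y)"
    unfolding krm_norm_alt F_def Y_def by (simp add: krm_scale_def kr_scale_def)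
  have XY: "c\<^sup>2 * X \<le> Y \<and> Y \<le> c'\<^sup>2 * X"
  proof (cases "finite (embeddings K)")
    case False
    then show ?thesis unfolding X_def Y_def by simp
  next
    case True
    have b': "c\<^sup>2 \<le> (cmod (\<sigma> a))\<^sup>2 \<and> (cmod (\<sigma> a))\<^sup>2 \<le> c'\<^sup>2" if "\<sigma> \<in> embeddings K" for \<sigma>
      using b[OF True] that c by (auto intro: power_mono)
    have "c\<^sup>2 * X = (\<Sum>l<m. \<Sum>\<sigma>\<in>embeddings K. c\<^sup>2 * (cmod (x l \<sigma>))\<^sup>2)"
      unfolding X_def by (simp add: sum_distrib_left)
    also have "\<dots> \<le> Y" unfolding Y_def
      by (intro sum_mono) (simp add: norm_mult power_mult_distrib b' mult_right_mono)
    finally have 1: "c\<^sup>2 * X \<le> Y" .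
    have "c'\<^sup>2 * X = (\<Sum>l<m. \<Sum>\<sigma>\<in>embeddings K. c'\<^sup>2 * (cmod (x l \<sigma>))\<^sup>2)"
      unfolding X_def by (simp add: sum_distrib_left)
    also have "\<dots> \<ge> Y" unfolding Y_def
      by (intro sum_mono) (simp add: norm_mult power_mult_distrib b' mult_right_mono)
    finally show ?thesis using 1 by simp
  qed
  have "c * sqrt (F * X) = sqrt (F * (c\<^sup>2 * X))"
    using c by (simp add: real_sqrt_mult)
  also have "\<dots> \<le> sqrt (F * Y)" using XY F by (intro real_sqrt_le_mono mult_left_mono) auto
  finally have 1: "c * sqrt (F * X) \<le> sqrt (F * Y)" .
  have "sqrt (F * Y) \<le> sqrt (F * (c'\<^sup>2 * X))"
    using XY F by (intro real_sqrt_le_mono mult_left_mono) auto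
  also have "\<dots> = c' * sqrt (F * X)" using c by (simp add: real_sqrt_mult)
  finally show ?thesis using 1 n1 n2 by simp
qed

lemma key_combo:
  fixes d k :: nat
  assumes K: "subfield_C K"
    and vz: "\<forall>i<k. \<forall>l \<sigma>. \<sigma> \<notin> embeddings K \<longrightarrow> v i l \<sigma> = 0"
    and uK: "\<forall>j<d. u j \<in> K"
    and a: "\<forall>i<k. a i = (\<Sum>j<d. of_int (n (i, j)) * u j)"
  shows "krm_sum (\<lambda>i. krm_scale (a i) (v i)) {..<k} =
         krm_sum (\<lambda>p. krm_intscale (n p) (krm_scale (u (snd p)) (v (fst p)))) ({..<k} \<times> {..<d})"
proof (intro ext)
  fix l \<sigma>
  have "(\<Sum>i<k. \<sigma> (a i) * v i l \<sigma>) = (\<Sum>i<k. \<Sum>j<d. of_int (n (i, j)) * (\<sigma> (u j) * v i l \<sigma>))"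
  proof (rule sum.cong)
    fix i assume i: "i \<in> {..<k}"
    show "\<sigma> (a i) * v i l \<sigma> = (\<Sum>j<d. of_int (n (i, j)) * (\<sigma> (u j) * v i l \<sigma>))"
    proof (cases "\<sigma> \<in> embeddings K")
      case True
      have uK': "\<forall>j\<in>{..<d}. u j \<in> K" using uK by simp
      have "\<sigma> (a i) = (\<Sum>j<d. of_int (n (i, j)) * \<sigma> (u j))"
        using emb_lin[OF K True finite_lessThan[of d] uK', of "\<lambda>j. n (i, j)"] a i by simp
      then show ?thesis by (simp add: sum_distrib_right mult.assoc)
    next
      case False
      then show ?thesis using vz i by simp
    qed
  qed simp
  also have "\<dots> = (\<Sum>p\<in>{..<k} \<times> {..<d}. of_int (n p) * (\<sigma> (u (snd p)) * v (fst p) l \<sigma>))"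
    by (simp add: sum.cartesian_product case_prod_beta)
  finally show "krm_sum (\<lambda>i. krm_scale (a i) (v i)) {..<k} l \<sigma> =
         krm_sum (\<lambda>p. krm_intscale (n p) (krm_scale (u (snd p)) (v (fst p)))) ({..<k} \<times> {..<d}) l \<sigma>"
    unfolding krm_sum_def krm_scale_def kr_scale_def krm_intscale_def by simp
qed

theorem lemma2p15:
  fixes K :: "complex set" and u :: "nat \<Rightarrow> complex"
  assumes "number_field K"
    and "Z_basis_OK K (nf_degree K) u"
  shows "\<exists>c c'. c > 0 \<and> c' > 0 \<and>
    (\<forall>(m::nat) (k::nat) (v::nat \<Rightarrow> krvec).
       k \<le> m \<longrightarrow> (\<forall>i<k. v i \<in> KRm K m) \<longrightarrow> OK_free K k v \<longrightarrow>
       (\<exists>w :: nat \<times> nat \<Rightarrow> krvec.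
          Z_basis_of ({..<k} \<times> {..<nf_degree K}) w (OK_span K k v) \<and>
          (\<forall>i<k. \<forall>j<nf_degree K.
             c * krm_norm K m (v i) \<le> krm_norm K m (w (i, j)) \<and>
             krm_norm K m (w (i, j)) \<le> c' * krm_norm K m (v i))))"
proof -
  have K: "subfield_C K" using assms(1) unfolding number_field_def by simp
  define d where "d = nf_degree K"
  define E where "E = embeddings K"
  have uO: "\<forall>j<d. u j \<in> K \<and> algebraic_integer (u j)"
    using assms(2) unfolding Z_basis_OK_def ring_of_integers_def d_def by simp
  have uspan: "\<forall>x\<in>ring_of_integers K. \<exists>a::nat \<Rightarrow> int. x = (\<Sum>j<d. of_int (a j) * u j)"
    using assms(2) unfolding Z_basis_OK_def d_def by blast
  have uind: "\<And>a::nat \<Rightarrow> int. (\<Sum>j<d. of_int (a j) * u j) = 0 \<Longrightarrow> \<forall>j<d. a j = 0"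
    using assms(2) unfolding Z_basis_OK_def d_def by blast
  have unz: "u j \<noteq> 0" if j: "j < d" for j
  proof
    assume u0: "u j = 0"
    have "(\<Sum>i<d. of_int (if i = j then 1 else 0) * u i) = (\<Sum>i<d. if i = j then u i else 0)"
      by (rule sum.cong) auto
    also have "\<dots> = 0" using j u0 by (simp add: sum.delta)
    finally have "\<forall>i<d. (if i = j then 1 else 0 :: int) = 0" by (rule uind)
    thus False using j by auto
  qed
  have snz: "\<sigma> (u j) \<noteq> 0" if "\<sigma> \<in> E" "j < d" for \<sigma> j
    using emb_nz[OF K, of \<sigma> "u j"] that uO unz unfolding E_def by auto
  define V where "V = (\<lambda>(\<sigma>, j). cmod (\<sigma> (u j))) ` (E \<times> {..<d})"
  define c where "c = (if finite E then Min (insert 1 V) else 1)"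
  define c' where "c' = (if finite E then Max (insert 1 V) else 1)"
  have Vpos: "\<forall>x\<in>insert 1 V. x > 0" unfolding V_def using snz by auto
  have cpos: "c > 0"
  proof (cases "finite E")
    case True
    hence "finite (insert 1 V)" unfolding V_def by simp
    hence "Min (insert 1 V) \<in> insert 1 V" by (intro Min_in) auto
    then show ?thesis using True Vpos unfolding c_def by auto
  qed (simp add: c_def)
  have cle: "c \<le> c'"
  proof (cases "finite E")
    case True
    hence f: "finite (insert 1 V)" unfolding V_def by simp
    have "Min (insert 1 V) \<le> 1" using f by simp
    moreover have "1 \<le> Max (insert 1 V)" using f by simp
    ultimately show ?thesis using True unfolding c_def c'_def by simp
  qed (simp add: c_def c'_def)
  have bounds: "c \<le> cmod (\<sigma> (u j)) \<and> cmod (\<sigma> (u j)) \<le> c'"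
    if "finite E" "\<sigma> \<in> E" "j < d" for \<sigma> j
  proof -
    have f: "finite (insert 1 V)" using that unfolding V_def by simp
    have "cmod (\<sigma> (u j)) \<in> insert 1 V" using that unfolding V_def by force
    then show ?thesis using f that unfolding c_def c'_def by simp
  qed
  have O0: "0 \<in> ring_of_integers K"
    unfolding ring_of_integers_def using subK(1)[OF K] alg_int_0 by simp
  show ?thesis
  proof (rule exI[of _ c], rule exI[of _ c'], intro conjI allI impI)
    show "c > 0" by (rule cpos)
    show "c' > 0" using cpos cle by simp
    fix m k :: nat and v :: "nat \<Rightarrow> krvec"
    assume km: "k \<le> m" and vK: "\<forall>i<k. v i \<in> KRm K m" and free: "OK_free K k v"
    have vz: "\<forall>i<k. \<forall>l \<sigma>. \<sigma> \<notin> embeddings K \<longrightarrow> v i l \<sigma> = 0"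
    proof (intro allI impI)
      fix i l \<sigma> assume i: "i < k" and s: "\<sigma> \<notin> embeddings K"
      show "v i l \<sigma> = 0"
      proof (cases "l < m")
        case True
        then have "v i l \<in> KR K" using vK i unfolding KRm_def by simp
        then show ?thesis using s unfolding KR_def by simp
      next
        case False
        then have "v i l = (\<lambda>_. 0)" using vK i unfolding KRm_def by simp
        then show ?thesis by simp
      qed
    qed
    have uK: "\<forall>j<d. u j \<in> K" using uO by simp
    define w where "w = (\<lambda>p :: nat \<times> nat. krm_scale (u (snd p)) (v (fst p)))"
    have combo: "krm_sum (\<lambda>i. krm_scale (a i) (v i)) {..<k} =
         krm_sum (\<lambda>p. krm_intscale (n p) (w p)) ({..<k} \<times> {..<d})"
      if "\<forall>i<k. a i = (\<Sum>j<d. of_int (n (i, j)) * u j)" for a n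
      unfolding w_def by (rule key_combo[OF K vz uK that])
    show "\<exists>w :: nat \<times> nat \<Rightarrow> krvec.
          Z_basis_of ({..<k} \<times> {..<nf_degree K}) w (OK_span K k v) \<and>
          (\<forall>i<k. \<forall>j<nf_degree K.
             c * krm_norm K m (v i) \<le> krm_norm K m (w (i, j)) \<and>
             krm_norm K m (w (i, j)) \<le> c' * krm_norm K m (v i))"
    proof (rule exI[of _ w], intro conjI)
      show "\<forall>i<k. \<forall>j<nf_degree K.
             c * krm_norm K m (v i) \<le> krm_norm K m (w (i, j)) \<and>
             krm_norm K m (w (i, j)) \<le> c' * krm_norm K m (v i)"
      proof (intro allI impI)
        fix i j assume i: "i < k" and j: "j < nf_degree K"
        show "c * krm_norm K m (v i) \<le> krm_norm K m (w (i, j)) \<and>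
             krm_norm K m (w (i, j)) \<le> c' * krm_norm K m (v i)"
          unfolding w_def snd_conv fst_conv
          by (rule norm_scale) (use cpos cle bounds j in \<open>auto simp: d_def E_def\<close>)
      qed
      show "Z_basis_of ({..<k} \<times> {..<nf_degree K}) w (OK_span K k v)"
        unfolding Z_basis_of_def d_def[symmetric]
      proof (intro conjI ballI allI impI)
        fix p assume p: "p \<in> {..<k} \<times> {..<d}"
        obtain i j where pij: "p = (i, j)" and i: "i < k" and j: "j < d" using p by auto
        define a where "a = (\<lambda>i'. if i' = i then u j else 0)"
        have aO: "\<forall>i'<k. a i' \<in> ring_of_integers K"
          unfolding a_def using O0 uO j unfolding ring_of_integers_def by auto
        have "krm_sum (\<lambda>i. krm_scale (a i) (v i)) {..<k} = w p"
        proof (intro ext)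
          fix l \<sigma>
          have "(\<Sum>i'<k. \<sigma> (a i') * v i' l \<sigma>) = (\<Sum>i'<k. if i' = i then \<sigma> (u j) * v i l \<sigma> else 0)"
          proof (rule sum.cong)
            fix i' assume i': "i' \<in> {..<k}"
            show "\<sigma> (a i') * v i' l \<sigma> = (if i' = i then \<sigma> (u j) * v i l \<sigma> else 0)"
            proof (cases "i' = i")
              case False
              then show ?thesis using vz i' emb_basic(1)[OF K, of \<sigma>] unfolding a_def
                by (cases "\<sigma> \<in> embeddings K") auto
            qed (simp add: a_def)
          qed simp
          also have "\<dots> = \<sigma> (u j) * v i l \<sigma>" using i by (simp add: sum.delta)
          finally show "krm_sum (\<lambda>i. krm_scale (a i) (v i)) {..<k} l \<sigma> = w p l \<sigma>"
            unfolding krm_sum_def krm_scale_def kr_scale_def w_def pij by simp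
        qed
        then show "w p \<in> OK_span K k v" unfolding OK_span_def
          by (intro CollectI exI[of _ a] conjI[OF sym aO])
      next
        fix x assume "x \<in> OK_span K k v"
        then have "\<exists>a. x = krm_sum (\<lambda>i. krm_scale (a i) (v i)) {..<k} \<and> (\<forall>i<k. a i \<in> ring_of_integers K)"
          unfolding OK_span_def by (simp only: mem_Collect_eq)
        then obtain a where x: "x = krm_sum (\<lambda>i. krm_scale (a i) (v i)) {..<k}"
          and aO: "\<forall>i<k. a i \<in> ring_of_integers K"
          by (elim exE conjE)
        have "\<forall>i\<in>{..<k}. \<exists>N. a i = (\<Sum>j<d. of_int (N j) * u j)"
        proof
          fix i assume "i \<in> {..<k}"
          hence "a i \<in> ring_of_integers K" using aO by simp
          thus "\<exists>N. a i = (\<Sum>j<d. of_int (N j) * u j)" by (rule bspec[OF uspan])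
        qed
        from bchoice[OF this] obtain N where N0: "\<forall>i\<in>{..<k}. a i = (\<Sum>j<d. of_int (N i j) * u j)"
          by blast
        hence N: "\<forall>i<k. a i = (\<Sum>j<d. of_int (N i j) * u j)" by simp
        have "x = krm_sum (\<lambda>p. krm_intscale ((\<lambda>(i, j). N i j) p) (w p)) ({..<k} \<times> {..<d})"
          unfolding x by (rule combo) (use N in simp)
        then show "\<exists>n. x = krm_sum (\<lambda>i. krm_intscale (n i) (w i)) ({..<k} \<times> {..<d})"
          by (rule exI[of _ "\<lambda>(i, j). N i j"])
      next
        fix n :: "nat \<times> nat \<Rightarrow> int" and p
        assume h: "krm_sum (\<lambda>i. krm_intscale (n i) (w i)) ({..<k} \<times> {..<d}) = krm_zero"
          and p: "p \<in> {..<k} \<times> {..<d}"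
        define a where "a = (\<lambda>i. \<Sum>j<d. of_int (n (i, j)) * u j)"
        have aO: "\<forall>i<k. a i \<in> ring_of_integers K"
        proof (intro allI impI)
          fix i assume "i < k"
          have "a i \<in> K" unfolding a_def
            by (rule lin_K[OF K finite_lessThan]) (use uK in simp)
          moreover have "algebraic_integer (a i)" unfolding a_def
            by (rule alg_int_sum) (use uO in auto)
          ultimately show "a i \<in> ring_of_integers K" unfolding ring_of_integers_def by simp
        qed
        have "krm_sum (\<lambda>i. krm_scale (a i) (v i)) {..<k} = krm_zero"
          using combo[of a n] h unfolding a_def by simp
        hence a0: "\<forall>i<k. a i = 0"
          using free unfolding OK_free_def using aO by (elim allE[of _ a] impE) auto
        obtain i j where pij: "p = (i, j)" and i: "i < k" and j: "j < d" using p by auto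
        have "\<forall>j<d. n (i, j) = 0" by (rule uind) (use a0 i in \<open>simp add: a_def\<close>)
        then show "n p = 0" using pij j by simp
      qed
    qed
  qed
qed

end
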